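(* Let $D=\{(s,q)\in\mathbb{H}\times\mathbb{H}: q^2-2q\,\mathrm{Re}[s]+|s|^2\neq0\}$ and define $F:D\to\mathbb{H}$ by $$F(s,q)=-\big(q^2-2q\,\mathrm{Re}[s]+|s|^2\big)^{-1}(q-\bar s).$$ Then for every point $(s_*,q_* )\in(\mathbb{H}\times\mathbb{H})\setminus D$, $F$ admits no continuous extension to $D\cup\{(s_*,q_* )\}$. In particular, for every $s\in\mathbb{H}\setminus\mathbb{R}$ the limit $\lim_{q\to\bar s}F(s,q)$ (over $q$ with $(s,q)\in D$) does not exist.
   Context: $\mathbb{H}$ denotes the algebra of quaternions; $\bar s$, $|s|$, $\mathrm{Re}[s]$ are conjugate, norm and real part. *)

theory Defs
  imports "HOL-Analysis.Analysis"
begin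

text \<open>The library has no quaternions; we model \<open>\<bbbH>\<close> as \<open>real^4\<close>
  (coordinates 0,1,2,3 = real, i, j, k parts), which carries the Euclidean
  norm (= quaternion norm) and topology, and define the Hamilton product,
  conjugate, real part and inverse explicitly.\<close>

type_synonym quat = "real^4"

definition quat :: "real \<Rightarrow> real \<Rightarrow> real \<Rightarrow> real \<Rightarrow> quat" where
  "quat a b c d = (\<chi> i. if i = 0 then a else if i = 1 then b else if i = 2 then c else d)"

definition qre :: "quat \<Rightarrow> real" where "qre q = q $ 0"
definition qi :: "quat \<Rightarrow> real" where "qi q = q $ 1"
definition qj :: "quat \<Rightarrow> real" where "qj q = q $ 2"
definition qk :: "quat \<Rightarrow> real" where "qk q = q $ 3"

definition qmult :: "quat \<Rightarrow> quat \<Rightarrow> quat" where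
  "qmult p q = quat
     (qre p * qre q - qi p * qi q - qj p * qj q - qk p * qk q)
     (qre p * qi q + qi p * qre q + qj p * qk q - qk p * qj q)
     (qre p * qj q - qi p * qk q + qj p * qre q + qk p * qi q)
     (qre p * qk q + qi p * qj q - qj p * qi q + qk p * qre q)"

definition qcnj :: "quat \<Rightarrow> quat" where
  "qcnj q = quat (qre q) (- qi q) (- qj q) (- qk q)"

definition qofreal :: "real \<Rightarrow> quat" where
  "qofreal r = quat r 0 0 0"

definition qinverse :: "quat \<Rightarrow> quat" where
  "qinverse q = (1 / (norm q)\<^sup>2) *\<^sub>R qcnj q"

definition charpoly :: "quat \<Rightarrow> quat \<Rightarrow> quat" where
  "charpoly s q = qmult q q - (2 * qre s) *\<^sub>R q + qofreal ((norm s)\<^sup>2)"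

definition dom_D :: "(quat \<times> quat) set" where
  "dom_D = {(s, q). charpoly s q \<noteq> 0}"

definition F :: "quat \<times> quat \<Rightarrow> quat" where
  "F sq = (case sq of (s, q) \<Rightarrow> - qmult (qinverse (charpoly s q)) (q - qcnj s))"

end

theory Submission imports Defs begin

lemma four_eq0: "(4::4) = 0" by simp
lemma quat_comps[simp]:
  "qre (quat a b c d) = a" "qi (quat a b c d) = b" "qj (quat a b c d) = c" "qk (quat a b c d) = d"
  by (simp_all add: quat_def qre_def qi_def qj_def qk_def)

lemma quat_coord_ops[simp]:
  "qre (x + y) = qre x + qre y" "qi (x + y) = qi x + qi y" "qj (x + y) = qj x + qj y" "qk (x + y) = qk x + qk y"
  "qre (x - y) = qre x - qre y" "qi (x - y) = qi x - qi y" "qj (x - y) = qj x - qj y" "qk (x - y) = qk x - qk y"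
  "qre (- x) = - qre x" "qi (- x) = - qi x" "qj (- x) = - qj x" "qk (- x) = - qk x"
  "qre (r *\<^sub>R x) = r * qre x" "qi (r *\<^sub>R x) = r * qi x" "qj (r *\<^sub>R x) = r * qj x" "qk (r *\<^sub>R x) = r * qk x"
  "qre 0 = 0" "qi 0 = 0" "qj 0 = 0" "qk 0 = 0"
  by (simp_all add: qre_def qi_def qj_def qk_def)

lemma quat_eq_iff: "x = y \<longleftrightarrow> qre x = qre y \<and> qi x = qi y \<and> qj x = qj y \<and> qk x = qk y"
  unfolding vec_eq_iff forall_4 qre_def qi_def qj_def qk_def by (auto simp: four_eq0)

lemma norm_sq: "(norm x)^2 = (qre x)^2 + (qi x)^2 + (qj x)^2 + (qk x)^2"
  unfolding norm_vec_def L2_set_def sum_4 qre_def qi_def qj_def qk_def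
  by (simp add: sum_nonneg four_eq0 algebra_simps)

lemma norm_qmult: "norm (qmult p q) = norm p * norm q"
proof -
  have "(norm (qmult p q))^2 = (norm p * norm q)^2"
    unfolding power_mult_distrib norm_sq by (simp add: qmult_def) algebra
  then show ?thesis by (simp add: power2_eq_imp_eq)
qed

lemma norm_qcnj: "norm (qcnj q) = norm q"
proof -
  have "(norm (qcnj q))^2 = (norm q)^2" unfolding norm_sq by (simp add: qcnj_def)
  then show ?thesis by (simp add: power2_eq_imp_eq)
qed

lemma norm_qinverse: "norm (qinverse q) = 1 / norm q"
  by (simp add: qinverse_def norm_qcnj power2_eq_square)

lemma norm_F: "norm (F (s, q)) = norm (q - qcnj s) / norm (charpoly s q)"
  by (simp add: F_def norm_qmult norm_qinverse)

lemma charpoly_comps: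
  "qre (charpoly s q) = (qre q)^2 - (qi q)^2 - (qj q)^2 - (qk q)^2 - 2 * qre s * qre q
      + ((qre s)^2 + (qi s)^2 + (qj s)^2 + (qk s)^2)"
  "qi (charpoly s q) = 2 * (qre q - qre s) * qi q"
  "qj (charpoly s q) = 2 * (qre q - qre s) * qj q"
  "qk (charpoly s q) = 2 * (qre q - qre s) * qk q"
  using norm_sq[of s]
  by (simp_all add: charpoly_def qmult_def qofreal_def power2_eq_square algebra_simps)

lemma seq_contra:
  fixes Y :: "nat \<Rightarrow> quat"
  assumes "Y \<longlonglongrightarrow> L" "t \<longlonglongrightarrow> 0" "\<forall>n. c0 \<le> (norm (t n *\<^sub>R Y n))^2" "c0 > 0"
  shows False
proof -
  have "(\<lambda>n. (norm (t n *\<^sub>R Y n))^2) \<longlonglongrightarrow> (norm (0 *\<^sub>R L))^2"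
    by (intro tendsto_intros assms)
  then have "c0 \<le> (norm (0 *\<^sub>R L))^2"
    by (rule LIMSEQ_le_const) (use assms in auto)
  then show False using assms by simp
qed

lemma caseB: "\<exists>J. norm J > 0 \<and> (\<forall>t. t \<noteq> 0 \<longrightarrow> (s, qcnj s + t *\<^sub>R J) \<in> dom_D \<and>
     (norm (t *\<^sub>R F (s, qcnj s + t *\<^sub>R J)))^2 = 1 / (norm J)^2)"
proof -
  define J where "J = (if qi s = 0 \<and> qj s = 0 then quat 0 1 0 0 else quat 0 (- qj s) (qi s) 0)"
  have J0: "qre J = 0" and orth: "qi J * qi s + qj J * qj s + qk J * qk s = 0"
    and nJ: "(norm J)^2 = (qi J)^2 + (qj J)^2" and qkJ: "qk J = 0"
    unfolding J_def norm_sq by auto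
  have pos: "(qi J)^2 + (qj J)^2 > 0"
    unfolding J_def by (auto simp: add_pos_nonneg sum_power2_gt_zero_iff)
  have nJpos: "norm J > 0" using pos nJ by (metis zero_less_norm_iff power_zero_numeral less_irrefl norm_zero)
  show ?thesis
  proof (intro exI conjI allI impI)
    show "norm J > 0" by fact
    fix t :: real assume t: "t \<noteq> 0"
    have o2: "t * (qi J * (qi s * 2)) + t * (qj J * (qj s * 2)) = 0"
    proof -
      have "2*t*(qi J*qi s + qj J*qj s) = 0" using orth qkJ by simp
      then show ?thesis by (simp add: algebra_simps)
    qed
    have cp: "charpoly s (qcnj s + t *\<^sub>R J) = quat (-(t^2 * (norm J)^2)) 0 0 0"
      unfolding quat_eq_iff charpoly_comps nJ using orth J0 qkJ o2
      by (simp add: qcnj_def power2_eq_square algebra_simps)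
    have "(norm (charpoly s (qcnj s + t *\<^sub>R J)))^2 = (t^2 * (norm J)^2)^2"
      unfolding cp norm_sq by simp
    then have ncp: "norm (charpoly s (qcnj s + t *\<^sub>R J)) = t^2 * (norm J)^2"
      by (simp add: power2_eq_imp_eq)
    show "(s, qcnj s + t *\<^sub>R J) \<in> dom_D"
      using ncp t nJpos unfolding dom_D_def by auto
    have "norm (t *\<^sub>R F (s, qcnj s + t *\<^sub>R J)) = \<bar>t\<bar> * (\<bar>t\<bar> * norm J) / (t^2 * (norm J)^2)"
      using norm_F ncp by simp
    also have "\<dots> = 1 / norm J" using t nJpos by (simp add: power2_eq_square field_simps)
    finally show "(norm (t *\<^sub>R F (s, qcnj s + t *\<^sub>R J)))^2 = 1 / (norm J)^2"
      by (simp add: power_divide)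
  qed
qed

lemma caseA:
  assumes z: "charpoly s q = 0" and ne: "q \<noteq> qcnj s"
  shows "\<exists>c0>0. \<forall>t. 0 < t \<and> t \<le> 1 \<longrightarrow> (s, q + t *\<^sub>R quat 1 0 0 0) \<in> dom_D \<and>
            c0 \<le> (norm (t *\<^sub>R F (s, q + t *\<^sub>R quat 1 0 0 0)))^2"
proof -
  define V where "V = (qi q)^2 + (qj q)^2 + (qk q)^2"
  define B where "B = (qi s)^2 + (qj s)^2 + (qk s)^2"
  define K where "K = (qi q + qi s)^2 + (qj q + qj s)^2 + (qk q + qk s)^2"
  have c0: "qre (charpoly s q) = 0" "qi (charpoly s q) = 0" "qj (charpoly s q) = 0" "qk (charpoly s q) = 0"
    using z by simp_all
  have re: "qre q = qre s"
  proof (rule ccontr)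
    assume h: "qre q \<noteq> qre s"
    then have "qi q = 0" "qj q = 0" "qk q = 0" using c0 unfolding charpoly_comps by auto
    then have "(qre q - qre s)^2 + B = 0" using c0(1) unfolding charpoly_comps B_def
      by (simp add: power2_eq_square algebra_simps)
    moreover have "(qre q - qre s)^2 > 0" using h by simp
    moreover have "B \<ge> 0" unfolding B_def by simp
    ultimately show False by linarith
  qed
  have VB: "V = B" using c0(1) re unfolding charpoly_comps V_def B_def
    by (simp add: power2_eq_square algebra_simps)
  have Kpos: "K > 0"
  proof -
    have "K \<noteq> 0"
    proof
      assume "K = 0"
      then have "qi q + qi s = 0" "qj q + qj s = 0" "qk q + qk s = 0"
        unfolding K_def by (simp_all add: sum_power2_eq_zero_iff add_nonneg_eq_0_iff)
      then have "q = qcnj s" using re unfolding quat_eq_iff qcnj_def by simp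
      with ne show False by simp
    qed
    moreover have "K \<ge> 0" unfolding K_def by simp
    ultimately show ?thesis by simp
  qed
  have V0: "V \<ge> 0" unfolding V_def by simp
  show ?thesis
  proof (intro exI[of _ "K / (1 + 4 * V)"] conjI allI impI)
    show "K / (1 + 4 * V) > 0" using Kpos V0 by simp
    fix t :: real assume t: "0 < t \<and> t \<le> 1"
    let ?X = "q + t *\<^sub>R quat 1 0 0 0"
    have cr: "qre (charpoly s ?X) = t^2"
      unfolding charpoly_comps using re VB unfolding V_def B_def
      by (simp add: power2_eq_square algebra_simps)
    have "(norm (charpoly s ?X))^2 = t^2 * (t^2 + 4 * V)"
      unfolding norm_sq cr unfolding charpoly_comps V_def using re
      by (simp add: power2_eq_square algebra_simps)
    then have ncp: "norm (charpoly s ?X) = sqrt (t^2 * (t^2 + 4 * V))"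
      by (metis norm_ge_zero real_sqrt_unique)
    have pos: "t^2 * (t^2 + 4 * V) > 0" using t V0 by (simp add: add_pos_nonneg)
    show "(s, ?X) \<in> dom_D" using ncp pos unfolding dom_D_def by auto
    have nx: "(norm (?X - qcnj s))^2 = t^2 + K"
      unfolding norm_sq K_def using re by (simp add: qcnj_def)
    have "(norm (t *\<^sub>R F (s, ?X)))^2 = t^2 * (norm (?X - qcnj s))^2 / (norm (charpoly s ?X))^2"
      by (simp add: norm_F power_mult_distrib power_divide)
    also have "\<dots> = (t^2 + K) / (t^2 + 4 * V)"
      using nx ncp pos t by (simp add: power2_eq_square)
    finally have eq: "(norm (t *\<^sub>R F (s, ?X)))^2 = (t^2 + K) / (t^2 + 4 * V)" .
    have t2: "t^2 \<le> 1" using t by (simp add: power_le_one)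
    have "K / (1 + 4 * V) \<le> (t^2 + K) / (t^2 + 4 * V)"
    proof -
      have d1: "1 + 4 * V > 0" "t^2 + 4 * V > 0" using V0 t pos by (auto simp: add_pos_nonneg)
      have "K * (t^2 + 4 * V) \<le> (t^2 + K) * (1 + 4 * V)"
      proof -
        have "0 \<le> t^2 * (1 + 4*V) + K * (1 - t^2)" using t2 Kpos V0 by (simp add: add_nonneg_nonneg)
        then show ?thesis by (simp add: algebra_simps)
      qed
      then show ?thesis using d1 by (simp add: divide_simps)
    qed
    then show "K / (1 + 4 * V) \<le> (norm (t *\<^sub>R F (s, ?X)))^2" using eq by simp
  qed
qed

lemma t_lim: "(\<lambda>n. 1 / (real n + 1)) \<longlonglongrightarrow> (0::real)"
  using LIMSEQ_Suc[OF lim_inverse_n'] by (simp add: add.commute)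

lemma t_props: "0 < 1 / (real n + 1) \<and> 1 / (real n + 1) \<le> (1::real)"
  by (simp add: field_simps)

lemma no_ext:
  assumes cont: "continuous_on (insert p dom_D) G" and eq: "\<forall>x\<in>dom_D. G x = F x"
    and X: "X \<longlonglongrightarrow> p" "\<forall>n. X n \<in> dom_D"
    and low: "\<forall>n. c0 \<le> (norm ((1 / (real n + 1)) *\<^sub>R F (X n)))^2" and c0: "c0 > 0"
  shows False
proof -
  have "(G \<circ> X) \<longlonglongrightarrow> G p"
    using cont X unfolding continuous_on_sequentially by auto
  then have "(\<lambda>n. F (X n)) \<longlonglongrightarrow> G p"
    using X(2) eq by (simp add: comp_def)
  then show False using seq_contra[OF _ t_lim low c0] by blast
qed

theorem theorem3p9:
  shows "(\<forall>p. p \<notin> dom_D \<longrightarrow>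
            \<not> (\<exists>G :: quat \<times> quat \<Rightarrow> quat.
                  continuous_on (insert p dom_D) G \<and> (\<forall>x\<in>dom_D. G x = F x)))
       \<and> (\<forall>s :: quat. s \<notin> range qofreal \<longrightarrow>
            \<not> (\<exists>L. ((\<lambda>q. F (s, q)) \<longlongrightarrow> L) (at (qcnj s) within {q. (s, q) \<in> dom_D})))"
proof (intro conjI allI impI notI)
  fix p :: "quat \<times> quat"
  assume pD: "p \<notin> dom_D" and "\<exists>G :: quat \<times> quat \<Rightarrow> quat.
                  continuous_on (insert p dom_D) G \<and> (\<forall>x\<in>dom_D. G x = F x)"
  then obtain G :: "quat \<times> quat \<Rightarrow> quat" where cont: "continuous_on (insert p dom_D) G"
    and eq: "\<forall>x\<in>dom_D. G x = F x" by blast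
  obtain s q where p: "p = (s, q)" by fastforce
  have z: "charpoly s q = 0" using pD p unfolding dom_D_def by auto
  let ?t = "\<lambda>n::nat. 1 / (real n + 1)"
  show False
  proof (cases "q = qcnj s")
    case True
    obtain J where J: "norm J > 0" and H: "\<And>t. t \<noteq> 0 \<Longrightarrow> (s, qcnj s + t *\<^sub>R J) \<in> dom_D \<and>
     (norm (t *\<^sub>R F (s, qcnj s + t *\<^sub>R J)))^2 = 1 / (norm J)^2"
      using caseB[of s] by blast
    let ?X = "\<lambda>n. (s, qcnj s + ?t n *\<^sub>R J)"
    have "?X \<longlonglongrightarrow> (s, qcnj s + 0 *\<^sub>R J)"
      by (intro tendsto_intros t_lim)
    then have Xl: "?X \<longlonglongrightarrow> p" using p True by simp
    have tn: "?t n \<noteq> 0" for n using t_props[of n] by linarith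
    have low: "\<forall>n. 1 / (norm J)^2 \<le> (norm (?t n *\<^sub>R F (?X n)))^2"
      using H tn by (metis order_refl)
    have inD: "\<forall>n. ?X n \<in> dom_D" using H tn by blast
    show False
      by (rule no_ext[OF cont eq Xl inD low]) (use J in simp)
  next
    case False
    obtain c0 where c0: "c0 > 0" and H: "\<And>t. 0 < t \<and> t \<le> 1 \<Longrightarrow> (s, q + t *\<^sub>R quat 1 0 0 0) \<in> dom_D \<and>
            c0 \<le> (norm (t *\<^sub>R F (s, q + t *\<^sub>R quat 1 0 0 0)))^2"
      using caseA[OF z False] by blast
    let ?X = "\<lambda>n. (s, q + ?t n *\<^sub>R quat 1 0 0 0)"
    have "?X \<longlonglongrightarrow> (s, q + 0 *\<^sub>R quat 1 0 0 0)"
      by (intro tendsto_intros t_lim)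
    then have Xl: "?X \<longlonglongrightarrow> p" using p by simp
    have low: "\<forall>n. c0 \<le> (norm (?t n *\<^sub>R F (?X n)))^2"
      using H t_props by blast
    have inD: "\<forall>n. ?X n \<in> dom_D" using H t_props by blast
    show False
      by (rule no_ext[OF cont eq Xl inD low c0])
  qed
next
  fix s :: quat
  assume "s \<notin> range qofreal"
  assume "\<exists>L. ((\<lambda>q. F (s, q)) \<longlongrightarrow> L) (at (qcnj s) within {q. (s, q) \<in> dom_D})"
  then obtain L where lim: "((\<lambda>q. F (s, q)) \<longlongrightarrow> L) (at (qcnj s) within {q. (s, q) \<in> dom_D})"
    by blast
  obtain J where J: "norm J > 0" and H: "\<And>t. t \<noteq> 0 \<Longrightarrow> (s, qcnj s + t *\<^sub>R J) \<in> dom_D \<and>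
     (norm (t *\<^sub>R F (s, qcnj s + t *\<^sub>R J)))^2 = 1 / (norm J)^2"
    using caseB[of s] by blast
  let ?t = "\<lambda>n::nat. 1 / (real n + 1)"
  let ?X = "\<lambda>n. qcnj s + ?t n *\<^sub>R J"
  have tn: "?t n \<noteq> 0" for n using t_props[of n] by linarith
  have "?X \<longlonglongrightarrow> qcnj s + 0 *\<^sub>R J"
    by (intro tendsto_intros t_lim)
  then have Xl: "?X \<longlonglongrightarrow> qcnj s" by simp
  have Xin: "\<forall>i. ?X i \<in> {q. (s, q) \<in> dom_D} - {qcnj s}"
    using H tn J by auto
  have "((\<lambda>q. F (s, q)) \<circ> ?X) \<longlonglongrightarrow> L"
    using lim[unfolded tendsto_at_iff_sequentially, rule_format, OF Xin[rule_format] Xl] .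
  then have "(\<lambda>n. F (s, ?X n)) \<longlonglongrightarrow> L" by (simp add: comp_def)
  moreover have low: "\<forall>n. 1 / (norm J)^2 \<le> (norm (?t n *\<^sub>R F (s, ?X n)))^2"
    using H tn by (metis order_refl)
  ultimately show False
    using seq_contra[OF _ t_lim] J by (meson zero_less_divide_1_iff zero_less_power)
qed

end
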